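(* Let $m$ be a positive integer, let $\lambda$ be the real root of $x^3-mx^2-1$, and let $K=\mathbb{Q}(\lambda)$. Then $\left(\frac{1}{1+\lambda+\lambda^2},\frac{\lambda}{1+\lambda+\lambda^2}\right)$ is a periodic point of $T_{K,5/2}$, i.e. it lies in $\Delta_K$ and there exist positive integers $m_1\neq n_1$ with $T_{K,5/2}^{m_1}\left(\frac{1}{1+\lambda+\lambda^2},\frac{\lambda}{1+\lambda+\lambda^2}\right)=T_{K,5/2}^{n_1}\left(\frac{1}{1+\lambda+\lambda^2},\frac{\lambda}{1+\lambda+\lambda^2}\right)$.
   Context: Let $K\subset\mathbb{R}$ be a real cubic number field, $N=N_{K/\mathbb{Q}}$ its norm, and $r=5/2$. Let $\Delta_K=\{(\alpha,\beta)\in K^2:\ 1,\alpha,\beta \text{ linearly independent over }\mathbb{Q},\ \alpha,\beta>0,\ \alpha+\beta<1\}$ and $Ind=\{(i,j): i,j\in\{0,1,2\},\ i\neq j\}$. Let $\Delta=\{(x,y)\in\mathbb{R}^2: x,y\ge 0,\ x+y\le 1\}$ and $\triangle(1,2)=\{(x,y)\in\Delta: x\ge y\}$, $\triangle(2,1)=\{x\le y\}$, $\triangle(0,1)=\{2x+y-1\le 0\}$, $\triangle(1,0)=\{2x+y-1\ge 0\}$, $\triangle(0,2)=\{x+2y-1\le0\}$, $\triangle(2,0)=\{x+2y-1\ge 0\}$ (all subsets of $\Delta$). Maps $T_{(i,j)}:\triangle(i,j)\to\Delta$: $T_{(1,2)}(x,y)=(\frac{x-y}{1-y},\frac{y}{1-y})$,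 $T_{(2,1)}(x,y)=(\frac{x}{1-x},\frac{y-x}{1-x})$, $T_{(0,1)}(x,y)=(\frac{x}{1-x},\frac{y}{1-x})$, $T_{(1,0)}(x,y)=(\frac{2x+y-1}{x+y},\frac{y}{x+y})$, $T_{(0,2)}(x,y)=(\frac{x}{1-y},\frac{y}{1-y})$, $T_{(2,0)}(x,y)=(\frac{x}{x+y},\frac{x+2y-1}{x+y})$. For $(\alpha,\beta)\in\Delta_K$ put $\gamma=1-\alpha-\beta$ and $v_{\{1,2\}}=\frac{\alpha^r\beta^r}{|N(\alpha)N(\beta)|}$, $v_{\{0,1\}}=\frac{\alpha^r\gamma^r}{|N(\alpha)N(\gamma)|}$, $v_{\{0,2\}}=\frac{\beta^r\gamma^r}{|N(\beta)N(\gamma)|}$; the maximum is attained at a unique pair $\{i_0,j_0\}$. $\varepsilon(\alpha,\beta)$ is the ordered pair $(i,j)\in Ind$ with $\{i,j\}=\{i_0,j_0\}$ and $(\alpha,\beta)\in\triangle(i,j)$, and $T_{K,5/2}(\alpha,\beta)=T_{\varepsilon(\alpha,\beta)}(\alpha,\beta)$ (a map $\Delta_K\to\Delta_K$). *)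

theory Defs
  imports Complex_Main
begin

definition cubic_field :: "real \<Rightarrow> real set" where
  "cubic_field lam = {x. \<exists>a b c. a \<in> \<rat> \<and> b \<in> \<rat> \<and> c \<in> \<rat> \<and> x = a + b*lam + c*lam^2}"

definition coords :: "real \<Rightarrow> real \<Rightarrow> real \<times> real \<times> real" where
  "coords lam x = (THE (a,b,c). a \<in> \<rat> \<and> b \<in> \<rat> \<and> c \<in> \<rat> \<and> x = a + b*lam + c*lam^2)"

definition det3 :: "real \<times> real \<times> real \<Rightarrow> real \<times> real \<times> real \<Rightarrow> real \<times> real \<times> real \<Rightarrow> real" where
  "det3 u v w = (case u of (u1,u2,u3) \<Rightarrow> case v of (v1,v2,v3) \<Rightarrow> case w of (w1,w2,w3) \<Rightarrow>
      u1*(v2*w3 - v3*w2) - v1*(u2*w3 - u3*w2) + w1*(u2*v3 - u3*v2))"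

text \<open>Field norm N_{K/Q}(x): determinant of the Q-linear map y \<mapsto> x*y on K,
 written in the basis 1, lam, lam^2 (columns = coordinates of x, x*lam, x*lam^2).\<close>
definition field_norm :: "real \<Rightarrow> real \<Rightarrow> real" where
  "field_norm lam x = det3 (coords lam x) (coords lam (x*lam)) (coords lam (x*lam^2))"

definition DeltaK :: "real set \<Rightarrow> (real \<times> real) set" where
  "DeltaK K = {(\<alpha>,\<beta>). \<alpha> \<in> K \<and> \<beta> \<in> K \<and>
     (\<forall>p q s. p \<in> \<rat> \<and> q \<in> \<rat> \<and> s \<in> \<rat> \<and> p + q*\<alpha> + s*\<beta> = 0 \<longrightarrow> p = 0 \<and> q = 0 \<and> s = 0) \<and>
     \<alpha> > 0 \<and> \<beta> > 0 \<and> \<alpha> + \<beta> < 1}"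

fun tri :: "nat \<times> nat \<Rightarrow> real \<times> real \<Rightarrow> bool" where
  "tri (i,j) (x,y) = (x \<ge> 0 \<and> y \<ge> 0 \<and> x + y \<le> 1 \<and>
     (if (i,j) = (1,2) then x \<ge> y
      else if (i,j) = (2,1) then x \<le> y
      else if (i,j) = (0,1) then 2*x + y - 1 \<le> 0
      else if (i,j) = (1,0) then 2*x + y - 1 \<ge> 0
      else if (i,j) = (0,2) then x + 2*y - 1 \<le> 0
      else if (i,j) = (2,0) then x + 2*y - 1 \<ge> 0
      else False))"

fun Tmap :: "nat \<times> nat \<Rightarrow> real \<times> real \<Rightarrow> real \<times> real" where
  "Tmap (i,j) (x,y) =
     (if (i,j) = (1,2) then ((x - y)/(1 - y), y/(1 - y))
      else if (i,j) = (2,1) then (x/(1 - x), (y - x)/(1 - x))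
      else if (i,j) = (0,1) then (x/(1 - x), y/(1 - x))
      else if (i,j) = (1,0) then ((2*x + y - 1)/(x + y), y/(x + y))
      else if (i,j) = (0,2) then (x/(1 - y), y/(1 - y))
      else (x/(x + y), (x + 2*y - 1)/(x + y)))"

text \<open>The selection epsilon(alpha,beta) for parameter r and norm N: first the pair
 {i0,j0} maximising v, then the ordering (i,j) with (alpha,beta) in triangle(i,j).
 (The maximum is unique on Delta_K, so tie-breaking is immaterial.)\<close>
definition eps :: "(real \<Rightarrow> real) \<Rightarrow> real \<Rightarrow> real \<times> real \<Rightarrow> nat \<times> nat" where
  "eps N r p = (case p of (\<alpha>,\<beta>) \<Rightarrow>
     let \<gamma> = 1 - \<alpha> - \<beta>;
         v12 = \<alpha> powr r * \<beta> powr r / \<bar>N \<alpha> * N \<beta>\<bar>;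
         v01 = \<alpha> powr r * \<gamma> powr r / \<bar>N \<alpha> * N \<gamma>\<bar>;
         v02 = \<beta> powr r * \<gamma> powr r / \<bar>N \<beta> * N \<gamma>\<bar>
     in if v12 \<ge> v01 \<and> v12 \<ge> v02 then (if tri (1,2) p then (1,2) else (2,1))
        else if v01 \<ge> v02 then (if tri (0,1) p then (0,1) else (1,0))
        else (if tri (0,2) p then (0,2) else (2,0)))"

definition T_K :: "(real \<Rightarrow> real) \<Rightarrow> real \<Rightarrow> real \<times> real \<Rightarrow> real \<times> real" where
  "T_K N r p = Tmap (eps N r p) p"

end

theory Submission
  imports Defs
begin



lemma rat_root_int:
  fixes x :: real and A B C :: int
  assumes "x \<in> \<rat>" "x^3 + of_int A * x^2 + of_int B * x + of_int C = 0"
  shows "x \<in> \<int>"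
proof -
  from assms(1) obtain p q :: int where q: "q > 0" and x: "x = of_int p / of_int q" and cop: "coprime p q"
    by (rule Rats_cases') blast
  have qne: "(of_int q :: real) \<noteq> 0" using q by simp
  have "(of_int p)^3 + of_int A * (of_int p)^2 * of_int q + of_int B * of_int p * (of_int q)^2 + of_int C * (of_int q)^3 = (0::real)"
  proof -
    have xq: "x * of_int q = of_int p" using qne x by simp
    have "(of_int q)^3 * (x^3 + of_int A * x^2 + of_int B * x + of_int C) = 0" using assms(2) by simp
    moreover have "(of_int q)^3 * (x^3 + of_int A * x^2 + of_int B * x + of_int C) =
        (x * of_int q)^3 + of_int A * (x * of_int q)^2 * of_int q + of_int B * (x * of_int q) * (of_int q)^2 + of_int C * (of_int q)^3"
      by (simp add: algebra_simps power2_eq_square power3_eq_cube)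
    ultimately show ?thesis unfolding xq by simp
  qed
  hence "p^3 + A * p^2 * q + B * p * q^2 + C * q^3 = 0"
  proof -
    assume h: "(of_int p)^3 + of_int A * (of_int p)^2 * of_int q + of_int B * of_int p * (of_int q)^2 + of_int C * (of_int q)^3 = (0::real)"
    have "(of_int (p^3 + A * p^2 * q + B * p * q^2 + C * q^3) :: real) = 0" using h by simp
    thus ?thesis by (simp only: of_int_eq_0_iff)
  qed
  hence "p^3 = - (A * p^2 * q + B * p * q^2 + C * q^3)" by linarith
  also have "\<dots> = q * (- A * p^2 - B * p * q - C * q^2)" by (simp add: algebra_simps power2_eq_square power3_eq_cube)
  finally have "p^3 = q * (- A * p^2 - B * p * q - C * q^2)" .
  hence "q dvd p^3" by simp
  moreover have "coprime q (p^3)" using cop by (simp add: coprime_commute)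
  ultimately have "is_unit q" using coprime_absorb_left by blast
  hence "q = 1" using q by simp
  thus ?thesis using x by simp
qed

locale cub =
  fixes m :: nat and lam :: real
  assumes mpos: "m > 0" and root: "lam ^ 3 - real m * lam ^ 2 - 1 = 0"
begin

lemma lam3: "lam^3 = real m * lam^2 + 1" using root by simp

lemma lam_gt: "lam > real m"
proof -
  have "lam^2 * (lam - real m) = 1" using root by (simp add: algebra_simps power2_eq_square power3_eq_cube)
  moreover have "lam^2 \<ge> 0" by simp
  ultimately show ?thesis
    using mult_nonneg_nonpos[of "lam^2" "lam - real m"] by linarith
qed

lemma lam_gt1: "lam > 1" using lam_gt mpos by linarith

lemma lam_lt: "lam < real m + 1"
proof -
  have e: "lam^2 * (lam - real m) = 1" using root by (simp add: algebra_simps power2_eq_square power3_eq_cube)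
  have "lam * lam > 1 * 1" using lam_gt1 by (intro mult_strict_mono) auto
  hence l2: "lam^2 > 1" by (simp add: power2_eq_square)
  show ?thesis
  proof (rule ccontr)
    assume "\<not> ?thesis"
    hence "lam^2 * 1 \<le> lam^2 * (lam - real m)" by (intro mult_left_mono) auto
    thus False using e l2 by simp
  qed
qed

lemma lam_not_rat: "lam \<notin> \<rat>"
proof
  assume "lam \<in> \<rat>"
  hence "lam \<in> \<int>" using rat_root_int[of lam "- int m" 0 "-1"] root by simp
  then obtain z where z: "lam = of_int z" by (auto elim: Ints_cases)
  have "real m < of_int z" "of_int z < real m + 1" using lam_gt lam_lt z by auto
  hence "int m < z" "z < int m + 1" by linarith+
  thus False by linarith
qed

lemma indep:
  assumes "a \<in> \<rat>" "b \<in> \<rat>" "c \<in> \<rat>" "a + b*lam + c*lam^2 = 0"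
  shows "a = 0 \<and> b = 0 \<and> c = 0"
proof (cases "c = 0")
  case True
  show ?thesis
  proof (cases "b = 0")
    case True thus ?thesis using \<open>c = 0\<close> assms by simp
  next
    case False
    hence "lam = - a / b" using assms \<open>c=0\<close> by (simp add: field_simps) 
    hence "lam \<in> \<rat>" using assms by simp
    thus ?thesis using lam_not_rat by simp
  qed
next
  case False
  define p where "p = - b / c"
  define q where "q = - a / c"
  have pq: "p \<in> \<rat>" "q \<in> \<rat>" using assms unfolding p_def q_def by auto
  have l2: "lam^2 = p * lam + q" using assms(4) False unfolding p_def q_def by (simp add: field_simps)
  have "lam^3 = (p^2 + q) * lam + p * q"
  proof -
    have "lam^3 = lam * lam^2" by (simp add: power3_eq_cube power2_eq_square)
    also have "\<dots> = lam * (p * lam + q)" by (simp only: l2)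
    also have "\<dots> = p * lam^2 + q * lam" by (simp add: algebra_simps power2_eq_square)
    also have "\<dots> = p * (p * lam + q) + q * lam" by (simp only: l2)
    also have "\<dots> = (p^2 + q) * lam + p * q" by (simp add: algebra_simps power2_eq_square)
    finally show ?thesis .
  qed
  moreover have "lam^3 = real m * p * lam + real m * q + 1"
    by (simp only: lam3 l2) (simp add: algebra_simps)
  ultimately have e: "(p^2 + q - real m * p) * lam = - (p * q - real m * q - 1)" by (simp add: algebra_simps)
  show ?thesis
  proof (cases "p^2 + q - real m * p = 0")
    case False
    hence "lam = - (p * q - real m * q - 1) / (p^2 + q - real m * p)" using e by (simp add: field_simps)
    hence "lam \<in> \<rat>" using pq by simp
    thus ?thesis using lam_not_rat by simp
  next
    case True
    hence q: "q = real m * p - p^2" by simp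
    hence "p * q - real m * q - 1 = 0" using e True by simp
    hence "p^3 + of_int (- 2 * int m) * p^2 + of_int (int m ^ 2) * p + of_int 1 = 0"
      unfolding q by (simp add: algebra_simps power2_eq_square power3_eq_cube)
    hence "p \<in> \<int>" using rat_root_int pq by blast
    then obtain z where z: "p = of_int z" by (auto elim: Ints_cases)
    have "p * (p - real m)^2 = -1" using \<open>p * q - real m * q - 1 = 0\<close> unfolding q
      by (simp add: algebra_simps power2_eq_square)
    hence "(of_int (z * (z - int m)^2) :: real) = of_int (-1)" unfolding z by simp
    hence zz: "z * (z - int m)^2 = -1" by (simp only: of_int_eq_iff)
    show ?thesis
    proof (cases "z \<ge> 0")
      case True
      have "z * (z - int m)^2 \<ge> 0" using True by simp
      thus ?thesis using zz by simp
    next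
      case False
      have "int m - z \<ge> 2" using mpos False by linarith
      hence "(2::int)^2 \<le> (int m - z)^2" by (rule power_mono) simp
      hence X: "(z - int m)^2 \<ge> 4" by (simp add: power2_commute)
      have "z * (z - int m)^2 \<le> (-1) * (z - int m)^2" using False by (intro mult_right_mono) auto
      hence "z * (z - int m)^2 \<le> -4" using X by linarith
      thus ?thesis using zz by simp
    qed
  qed
qed

end



definition P3 :: "real \<Rightarrow> real \<Rightarrow> real \<Rightarrow> real \<Rightarrow> real" where
  "P3 m a b c = det3 (a,b,c) (c,a,b+c*m) (b+c*m, c, a+m*b+m^2*c)"

lemma P3_expl: "P3 m a b c = a*(a*(a+m*b+m^2*c) - (b+c*m)*c) - c*(b*(a+m*b+m^2*c) - c*c) + (b+c*m)*(b*(b+c*m) - c*a)"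
  unfolding P3_def det3_def by simp

lemma P3_mult: "P3 m (a*d+b*g+c*e+c*g*m) (a*e+b*d+c*g) (a*g+b*e+c*d+m*(b*g+c*e)+m^2*c*g) = P3 m a b c * P3 m d e g"
  unfolding P3_expl by algebra

context cub begin
definition el :: "real \<Rightarrow> real \<Rightarrow> real \<Rightarrow> real" where "el a b c = a + b*lam + c*lam^2"

lemma el_mult: "el a b c * el d e g = el (a*d+b*g+c*e+c*g*real m) (a*e+b*d+c*g) (a*g+b*e+c*d+real m*(b*g+c*e)+(real m)^2*c*g)"
  using lam3 unfolding el_def by algebra

lemma P3_factor: "P3 (real m) a b c = el a b c * ((a - c*(lam^2 - m*lam))^2 - (lam - m)*(b - c*(lam - m))*(a - c*(lam^2 - m*lam)) + (lam^2 - m*lam)*(b - c*(lam - m))^2)"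
  using lam3 unfolding el_def P3_expl by algebra
end


context cub begin

lemma coords_el: assumes "a \<in> \<rat>" "b \<in> \<rat>" "c \<in> \<rat>" shows "coords lam (el a b c) = (a,b,c)"
  unfolding coords_def
proof (rule the_equality)
  show "case (a,b,c) of (a', b', c') \<Rightarrow> a' \<in> \<rat> \<and> b' \<in> \<rat> \<and> c' \<in> \<rat> \<and> el a b c = a' + b' * lam + c' * lam\<^sup>2"
    using assms by (simp add: el_def)
next
  fix t assume "case t of (a', b', c') \<Rightarrow> a' \<in> \<rat> \<and> b' \<in> \<rat> \<and> c' \<in> \<rat> \<and> el a b c = a' + b' * lam + c' * lam\<^sup>2"
  then obtain a' b' c' where t: "t = (a',b',c')" and h: "a' \<in> \<rat>" "b' \<in> \<rat>" "c' \<in> \<rat>" "el a b c = a' + b' * lam + c' * lam\<^sup>2"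
    by (cases t) auto
  have "(a - a') + (b - b')*lam + (c - c')*lam^2 = 0" using h(4) unfolding el_def by (simp add: algebra_simps)
  moreover have "a - a' \<in> \<rat>" "b - b' \<in> \<rat>" "c - c' \<in> \<rat>" using assms h by auto
  ultimately have "a - a' = 0 \<and> b - b' = 0 \<and> c - c' = 0" using indep by blast
  thus "t = (a,b,c)" using t by simp
qed

lemma norm_el: assumes "a \<in> \<rat>" "b \<in> \<rat>" "c \<in> \<rat>" shows "field_norm lam (el a b c) = P3 (real m) a b c"
proof -
  have "el a b c * lam = el c a (b + c*real m)" using el_mult[of a b c 0 1 0] by (simp add: el_def)
  moreover have "el a b c * lam^2 = el (b + c*real m) c (a + real m*b + (real m)^2*c)"
    using el_mult[of a b c 0 0 1] by (simp add: el_def algebra_simps)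
  moreover have "b + c*real m \<in> \<rat>" "a + real m*b + (real m)^2*c \<in> \<rat>" using assms by auto
  ultimately show ?thesis using assms unfolding field_norm_def P3_def
    by (simp add: coords_el)
qed

lemma inK_el: "a \<in> \<rat> \<Longrightarrow> b \<in> \<rat> \<Longrightarrow> c \<in> \<rat> \<Longrightarrow> el a b c \<in> cubic_field lam"
  unfolding cubic_field_def el_def by blast

lemma K_cases: assumes "x \<in> cubic_field lam"
  obtains a b c where "a \<in> \<rat>" "b \<in> \<rat>" "c \<in> \<rat>" "x = el a b c"
  using assms unfolding cubic_field_def el_def by blast

lemma K_add: "x \<in> cubic_field lam \<Longrightarrow> y \<in> cubic_field lam \<Longrightarrow> x + y \<in> cubic_field lam"
  apply (elim K_cases)
  subgoal for a b c d e g
    using inK_el[of "a+d" "b+e" "c+g"] by (simp add: el_def algebra_simps)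
  done

lemma K_diff: "x \<in> cubic_field lam \<Longrightarrow> y \<in> cubic_field lam \<Longrightarrow> x - y \<in> cubic_field lam"
  apply (elim K_cases)
  subgoal for a b c d e g
    using inK_el[of "a-d" "b-e" "c-g"] by (simp add: el_def algebra_simps)
  done

lemma K_mult: assumes "x \<in> cubic_field lam" "y \<in> cubic_field lam"
  shows "x * y \<in> cubic_field lam \<and> field_norm lam (x*y) = field_norm lam x * field_norm lam y"
proof -
  obtain a b c where x: "a \<in> \<rat>" "b \<in> \<rat>" "c \<in> \<rat>" "x = el a b c" using assms(1) by (rule K_cases)
  obtain d e g where y: "d \<in> \<rat>" "e \<in> \<rat>" "g \<in> \<rat>" "y = el d e g" using assms(2) by (rule K_cases)
  have r: "a*d+b*g+c*e+c*g*real m \<in> \<rat>" "a*e+b*d+c*g \<in> \<rat>" "a*g+b*e+c*d+real m*(b*g+c*e)+(real m)^2*c*g \<in> \<rat>"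
    using x y by auto
  show ?thesis unfolding x y el_mult using r x y
    by (simp add: inK_el norm_el P3_mult)
qed

lemma P3_nonzero: assumes "a \<in> \<rat>" "b \<in> \<rat>" "c \<in> \<rat>" "el a b c \<noteq> 0"
  shows "P3 (real m) a b c \<noteq> 0"
proof -
  define p where "p = lam - real m"
  define q where "q = lam^2 - real m * lam"
  define e where "e = b - c * p"
  define h where "h = a - c * q"
  have p0: "p > 0" "p < 1" using lam_gt lam_lt unfolding p_def by auto
  have qp: "q = lam * p" unfolding q_def p_def by (simp add: algebra_simps power2_eq_square)
  have d: "4*q - p^2 > 0"
  proof -
    have "p * p < 4 * lam * p" using p0 lam_gt1 by (intro mult_strict_right_mono) auto
    thus ?thesis unfolding qp by (simp add: power2_eq_square)
  qed
  have Q: "4 * (h^2 - p*e*h + q*e^2) = (2*h - p*e)^2 + (4*q - p^2)*e^2"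
    by (simp add: algebra_simps power2_eq_square)
  have "\<not> (e = 0 \<and> h = 0)"
  proof
    assume eh: "e = 0 \<and> h = 0"
    show False
    proof (cases "c = 0")
      case True
      hence "a = 0" "b = 0" using eh unfolding e_def h_def by auto
      thus False using assms(4) True unfolding el_def by simp
    next
      case False
      hence "p = b / c" using eh unfolding e_def by (simp add: field_simps)
      hence "lam = b / c + real m" unfolding p_def by simp
      hence "lam \<in> \<rat>" using assms by simp
      thus False using lam_not_rat by simp
    qed
  qed
  hence "(2*h - p*e)^2 + (4*q - p^2)*e^2 > 0"
  proof (cases "e = 0")
    case True
    hence "h \<noteq> 0" using \<open>\<not> (e = 0 \<and> h = 0)\<close> by simp
    thus ?thesis using True by simp
  next
    case False
    hence "(4*q - p^2)*e^2 > 0" using d by simp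
    moreover have "(2*h - p*e)^2 \<ge> 0" by simp
    ultimately show ?thesis by linarith
  qed
  hence "0 < 4 * (h^2 - p*e*h + q*e^2)" unfolding Q .
  hence "h^2 - p*e*h + q*e^2 > 0" by simp
  moreover have "P3 (real m) a b c = el a b c * (h^2 - p*e*h + q*e^2)"
    unfolding P3_factor h_def e_def p_def q_def by (simp add: algebra_simps)
  ultimately show ?thesis using assms(4) by simp
qed

lemma K_norm_nonzero: assumes "x \<in> cubic_field lam" "x \<noteq> 0" shows "field_norm lam x \<noteq> 0"
proof -
  obtain a b c where x: "a \<in> \<rat>" "b \<in> \<rat>" "c \<in> \<rat>" "x = el a b c" using assms(1) by (rule K_cases)
  thus ?thesis using P3_nonzero norm_el assms(2) by simp
qed

lemma K_inverse: assumes "x \<in> cubic_field lam" "x \<noteq> 0" shows "1 / x \<in> cubic_field lam"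
proof -
  obtain a b c where x: "a \<in> \<rat>" "b \<in> \<rat>" "c \<in> \<rat>" "x = el a b c" using assms(1) by (rule K_cases)
  define P where "P = P3 (real m) a b c"
  have P0: "P \<noteq> 0" using P3_nonzero x assms(2) unfolding P_def by simp
  define C1 where "C1 = a*(a+real m*b+(real m)^2*c) - c*(b+c*real m)"
  define C2 where "C2 = -(b*(a+real m*b+(real m)^2*c) - c*c)"
  define C3 where "C3 = b*(b+c*real m) - a*c"
  have eq: "el a b c * el C1 C2 C3 = P"
    using lam3 unfolding P_def P3_expl el_def C1_def C2_def C3_def by algebra
  have "1 / x = el C1 C2 C3 / P"
    using eq P0 assms(2) x(4) by (simp add: field_simps)
  also have "\<dots> = el (C1/P) (C2/P) (C3/P)" unfolding el_def by (simp add: add_divide_distrib)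
  finally have "1 / x = el (C1/P) (C2/P) (C3/P)" .
  moreover have "C1/P \<in> \<rat>" "C2/P \<in> \<rat>" "C3/P \<in> \<rat>"
    using x unfolding C1_def C2_def C3_def P_def P3_expl by auto
  ultimately show ?thesis using inK_el by simp
qed

end



definition pt :: "real \<Rightarrow> real \<Rightarrow> real \<Rightarrow> real \<times> real" where
  "pt a b c = (a/(a+b+c), b/(a+b+c))"

lemma pt_scale: "t \<noteq> 0 \<Longrightarrow> pt (t*a) (t*b) (t*c) = pt a b c"
  unfolding pt_def by (simp add: distrib_left[symmetric] mult.assoc[symmetric])

lemma T02: assumes "a > 0" "b > 0" "c > 0" shows "Tmap (0,2) (pt a b c) = pt a b (c - b)"
proof -
  have h: "1 - b/(a+b+c) = (a+c)/(a+b+c)" using assms by (simp add: field_simps)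
  show ?thesis unfolding pt_def using assms by (simp add: h)
qed
lemma T21: assumes "a > 0" "b > 0" "c > 0" shows "Tmap (2,1) (pt a b c) = pt a (b - a) c"
proof -
  have h: "1 - a/(a+b+c) = (b+c)/(a+b+c)" using assms by (simp add: field_simps)
  have h2: "b/(a+b+c) - a/(a+b+c) = (b-a)/(a+b+c)" by (simp add: diff_divide_distrib)
  show ?thesis unfolding pt_def using assms by (simp add: h h2)
qed
lemma T10: assumes "a > 0" "b > 0" "c > 0" shows "Tmap (1,0) (pt a b c) = pt (a - c) b c"
proof -
  have s: "a+b+c \<noteq> 0" using assms by simp
  define S where "S = a+b+c"
  have S: "S \<noteq> 0" using s S_def by simp
  have "2 * (a/S) + b/S - 1 = (a-c)/S" using S by (simp add: field_simps) (simp add: S_def)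
  hence h: "2 * (a/(a+b+c)) + b/(a+b+c) - 1 = (a-c)/(a+b+c)" unfolding S_def .
  have h3: "(2 * a / (a + b + c) + b / (a + b + c) - 1) * (a + b + c) = a - c"
    using h s by simp
  have h2: "a/(a+b+c) + b/(a+b+c) = (a+b)/(a+b+c)" by (simp add: add_divide_distrib)
  show ?thesis unfolding pt_def using assms by (simp add: h h2 h3)
qed

context cub begin

abbreviation "NN \<equiv> field_norm lam"

definition w :: "real \<Rightarrow> real \<Rightarrow> real" where
  "w x y = x powr (5/2) * y powr (5/2) / \<bar>NN x * NN y\<bar>"

lemma vform:
  assumes "x \<in> cubic_field lam" "y \<in> cubic_field lam" "s \<in> cubic_field lam" "s > 0"
  shows "(x/s) powr (5/2) * (y/s) powr (5/2) / \<bar>NN (x/s) * NN (y/s)\<bar>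
       = w x y / (s powr (5/2) * s powr (5/2) * (NN (1/s))^2)"
proof -
  have hs: "1/s \<in> cubic_field lam" using K_inverse assms by simp
  have "NN (x/s) = NN x * NN (1/s)" using K_mult[OF assms(1) hs] by simp
  moreover have "NN (y/s) = NN y * NN (1/s)" using K_mult[OF assms(2) hs] by simp
  ultimately show ?thesis unfolding w_def powr_divide
    by (simp add: abs_mult power2_eq_square field_simps)
qed

lemma eps_pt:
  assumes K: "a \<in> cubic_field lam" "b \<in> cubic_field lam" "c \<in> cubic_field lam"
    and pos: "a > 0" "b > 0" "c > 0"
  shows "eps NN (5/2) (pt a b c) =
     (if w a b \<ge> w a c \<and> w a b \<ge> w b c then (if tri (1,2) (pt a b c) then (1,2) else (2,1))
        else if w a c \<ge> w b c then (if tri (0,1) (pt a b c) then (0,1) else (1,0))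
        else (if tri (0,2) (pt a b c) then (0,2) else (2,0)))"
proof -
  define s where "s = a + b + c"
  have s: "s > 0" "s \<in> cubic_field lam" using pos K unfolding s_def by (auto intro: K_add)
  have hs: "1/s \<in> cubic_field lam" using K_inverse s by simp
  have "NN (1/s) \<noteq> 0" using K_norm_nonzero[OF hs] s by simp
  define D where "D = s powr (5/2) * s powr (5/2) * (NN (1/s))^2"
  have D: "D > 0" unfolding D_def using s \<open>NN (1/s) \<noteq> 0\<close> by simp
  have cs: "c = s - a - b" unfolding s_def by simp
  have g: "1 - a/s - b/s = c/s" using s unfolding cs by (simp add: field_simps)
  have p: "pt a b c = (a/s, b/s)" unfolding pt_def s_def by simp
  have v1: "(a/s) powr (5/2) * (b/s) powr (5/2) / \<bar>NN (a/s) * NN (b/s)\<bar> = w a b / D"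
    using vform[OF K(1) K(2) s(2) s(1)] unfolding D_def .
  have v2: "(a/s) powr (5/2) * (c/s) powr (5/2) / \<bar>NN (a/s) * NN (c/s)\<bar> = w a c / D"
    using vform[OF K(1) K(3) s(2) s(1)] unfolding D_def .
  have v3: "(b/s) powr (5/2) * (c/s) powr (5/2) / \<bar>NN (b/s) * NN (c/s)\<bar> = w b c / D"
    using vform[OF K(2) K(3) s(2) s(1)] unfolding D_def .
  have c: "\<And>u v. (u / D \<le> v / D) = (u \<le> v)" using D by (simp add: divide_le_cancel)
  show ?thesis unfolding eps_def p
    by (simp only: prod.case Let_def g v1 v2 v3 c)
qed

end



lemma tri_eqs: "tri (0,2) (x,y) = (x \<ge> 0 \<and> y \<ge> 0 \<and> x+y \<le> 1 \<and> x + 2*y - 1 \<le> 0)"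
  "tri (1,2) (x,y) = (x \<ge> 0 \<and> y \<ge> 0 \<and> x+y \<le> 1 \<and> x \<ge> y)"
  "tri (0,1) (x,y) = (x \<ge> 0 \<and> y \<ge> 0 \<and> x+y \<le> 1 \<and> 2*x + y - 1 \<le> 0)"
  by simp_all

lemma tri_pt:
  assumes "a > 0" "b > 0" "c > 0"
  shows "tri (0,2) (pt a b c) \<longleftrightarrow> b \<le> c"
    and "tri (1,2) (pt a b c) \<longleftrightarrow> b \<le> a"
    and "tri (0,1) (pt a b c) \<longleftrightarrow> a \<le> c"
proof -
  define S where "S = a + b + c"
  have S: "S > 0" using assms S_def by simp
  have cS: "c = S - a - b" using S_def by simp
  have p: "pt a b c = (a/S, b/S)" unfolding pt_def S_def by simp
  have x0: "a/S \<ge> 0" "b/S \<ge> 0" using assms S by auto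
  have s1: "a/S + b/S \<le> 1"
  proof -
    have "a/S + b/S = (a+b)/S" by (simp add: add_divide_distrib)
    also have "\<dots> \<le> 1" using S assms unfolding cS by simp
    finally show ?thesis .
  qed
  have h1: "a/S + 2*(b/S) - 1 = (b - c)/S" using S unfolding cS by (simp add: field_simps)
  have h2: "(a/S \<ge> b/S) = (b \<le> a)" using S by (simp add: divide_le_cancel)
  have h3: "2*(a/S) + b/S - 1 = (a - c)/S" using S unfolding cS by (simp add: field_simps)
  have d: "\<And>u. (u / S \<le> 0) = (u \<le> 0)" using S by (simp add: divide_le_0_iff)
  show "tri (0,2) (pt a b c) \<longleftrightarrow> b \<le> c" unfolding p tri_eqs h1 d using x0 s1 by simp
  show "tri (1,2) (pt a b c) \<longleftrightarrow> b \<le> a" unfolding p tri_eqs h2 using x0 s1 by simp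
  show "tri (0,1) (pt a b c) \<longleftrightarrow> a \<le> c" unfolding p tri_eqs h3 d using x0 s1 by simp
qed

context cub begin

definition cj :: "nat \<Rightarrow> real" where "cj j = lam^2 - real j * lam"

lemma cj_Suc: "cj j - lam = cj (Suc j)" unfolding cj_def by (simp add: algebra_simps)

lemma K1: "1 \<in> cubic_field lam" "lam \<in> cubic_field lam" "cj j \<in> cubic_field lam"
proof -
  show "1 \<in> cubic_field lam" using inK_el[of 1 0 0] by (simp add: el_def)
  show "lam \<in> cubic_field lam" using inK_el[of 0 1 0] by (simp add: el_def)
  show "cj j \<in> cubic_field lam" using inK_el[of 0 "- real j" 1] by (simp add: el_def cj_def)
qed

lemma N1: "NN 1 = 1" "NN lam = 1" "NN (cj j) = 1 + (real j)^2 * (real m - real j)"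
proof -
  have "NN (el 1 0 0) = 1" by (simp add: norm_el P3_expl)
  thus "NN 1 = 1" by (simp add: el_def)
  have "NN (el 0 1 0) = 1" by (simp add: norm_el P3_expl)
  thus "NN lam = 1" by (simp add: el_def)
  have "NN (el 0 (- real j) 1) = 1 + (real j)^2 * (real m - real j)"
    by (simp add: norm_el P3_expl) (simp add: algebra_simps power2_eq_square)
  thus "NN (cj j) = 1 + (real j)^2 * (real m - real j)" by (simp add: el_def cj_def)
qed

lemma cj_gt: assumes "j < m" shows "cj j > lam" "cj j > 0"
proof -
  have "lam - real j > 1" using lam_gt assms by linarith
  hence "lam * (lam - real j) > lam * 1" using lam_gt1 by (intro mult_strict_left_mono) auto
  thus "cj j > lam" unfolding cj_def by (simp add: algebra_simps power2_eq_square)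
  thus "cj j > 0" using lam_gt1 by simp
qed

lemma key: assumes "j < m" shows "cj j powr (5/2) > NN (cj j)" "NN (cj j) > 0"
proof -
  define M where "M = real m"
  define d where "d = real m - real j"
  have d1: "d \<ge> 1" using assms unfolding d_def by linarith
  have Mj: "M \<ge> real j + 1" using assms unfolding M_def by linarith
  have c: "cj j = lam * (lam - real j)" unfolding cj_def by (simp add: algebra_simps power2_eq_square)
  have "lam * (lam - real j) > M * d"
    using lam_gt d1 unfolding M_def d_def by (intro mult_strict_mono) auto
  hence cgt: "cj j > M * d" using c by simp
  have Md: "M * d \<ge> 1" using d1 Mj using mult_mono[of 1 M 1 d] by simp
  have c1: "cj j \<ge> 1" using cgt Md by simp
  have "cj j powr (5/2) \<ge> cj j powr 2" using c1 by (intro powr_mono) auto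
  hence p2: "cj j powr (5/2) \<ge> (cj j)^2" using c1 by simp
  have "(M*d)^2 < (cj j)^2" using cgt Md by (intro power_strict_mono) auto
  moreover have "(M*d)^2 \<ge> M^2 * d"
  proof -
    have "M^2 * d \<le> M^2 * (d * d)" using d1 by (intro mult_left_mono) auto
    thus ?thesis by (simp add: power2_eq_square algebra_simps)
  qed
  moreover have "M^2 \<ge> (real j)^2 + 1"
  proof -
    have "(real j + 1)^2 \<le> M^2" using Mj by (intro power_mono) auto
    thus ?thesis by (simp add: power2_eq_square algebra_simps)
  qed
  hence "M^2 * d \<ge> ((real j)^2 + 1) * d" using d1 by (intro mult_right_mono) auto
  moreover have "((real j)^2 + 1) * d \<ge> 1 + (real j)^2 * d" using d1 by (simp add: algebra_simps)
  ultimately have "(cj j)^2 > 1 + (real j)^2 * d" by linarith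
  thus "cj j powr (5/2) > NN (cj j)" using p2 unfolding N1(3) d_def by linarith
  show "NN (cj j) > 0" unfolding N1(3) using d1 unfolding d_def
    by (simp add: add_pos_nonneg)
qed

lemma lam_powr: "lam powr (5/2) > 1"
proof -
  have "lam powr 0 < lam powr (5/2)" using lam_gt1 by (intro powr_less_mono) auto
  thus ?thesis using lam_gt1 by simp
qed

abbreviation "TT \<equiv> T_K NN (5/2)"

lemma phase1: assumes "j < m" shows "TT (pt 1 lam (cj j)) = pt 1 lam (cj (Suc j))"
proof -
  let ?c = "cj j"
  let ?L = "lam powr (5/2)" and ?C = "?c powr (5/2)" and ?n = "NN ?c"
  have n: "?n > 0" "?C > ?n" using key assms by auto
  have cg: "?c > lam" "?c > 0" using cj_gt assms by auto
  have l0: "lam > 0" using lam_gt1 by simp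
  have L: "?L > 1" by (rule lam_powr)
  have w1: "w 1 lam = ?L" "w 1 ?c = ?C / ?n" "w lam ?c = ?L * (?C / ?n)"
    unfolding w_def N1(1) N1(2) using n by (auto simp: powr_mult)
  have Cn: "?C / ?n > 1" using n by simp
  have a1: "w lam ?c > w 1 lam" unfolding w1 using L Cn
    using mult_strict_left_mono[of 1 "?C / ?n" ?L] l0 by (simp add: less_imp_le)
  have a2: "w lam ?c > w 1 ?c" unfolding w1 using L Cn
    using mult_strict_right_mono[of 1 ?L "?C / ?n"] l0 by (simp add: less_imp_le)
  have t: "tri (0,2) (pt 1 lam ?c)" using tri_pt(1)[OF zero_less_one l0 cg(2)] cg by simp
  have e0: "eps NN (5/2) (pt 1 lam ?c) = (if w 1 lam \<ge> w 1 ?c \<and> w 1 lam \<ge> w lam ?c then (if tri (1,2) (pt 1 lam ?c) then (1,2) else (2,1))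
        else if w 1 ?c \<ge> w lam ?c then (if tri (0,1) (pt 1 lam ?c) then (0,1) else (1,0))
        else (if tri (0,2) (pt 1 lam ?c) then (0,2) else (2,0)))"
    by (rule eps_pt[OF K1(1) K1(2) K1(3) zero_less_one l0 cg(2)])
  have e: "eps NN (5/2) (pt 1 lam ?c) = (0,2)" unfolding e0 using a1 a2 t by simp
  have "Tmap (0,2) (pt 1 lam ?c) = pt 1 lam (?c - lam)" by (rule T02[OF zero_less_one l0 cg(2)])
  thus ?thesis unfolding T_K_def e cj_Suc .
qed

lemma phase2: assumes "j < m" shows "TT (pt lam (cj j) 1) = pt lam (cj (Suc j)) 1"
proof -
  let ?c = "cj j"
  let ?L = "lam powr (5/2)" and ?C = "?c powr (5/2)" and ?n = "NN ?c"
  have n: "?n > 0" "?C > ?n" using key assms by auto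
  have cg: "?c > lam" "?c > 0" using cj_gt assms by auto
  have l0: "lam > 0" using lam_gt1 by simp
  have L: "?L > 1" by (rule lam_powr)
  have w1: "w lam 1 = ?L" "w ?c 1 = ?C / ?n" "w lam ?c = ?L * (?C / ?n)"
    unfolding w_def N1(1) N1(2) using n by (auto simp: powr_mult)
  have Cn: "?C / ?n > 1" using n by simp
  have a1: "w lam ?c \<ge> w lam 1" unfolding w1 using L Cn
    using mult_strict_left_mono[of 1 "?C / ?n" ?L] l0 by (simp add: less_imp_le)
  have a2: "w lam ?c \<ge> w ?c 1" unfolding w1 using L Cn
    using mult_strict_right_mono[of 1 ?L "?C / ?n"] l0 by (simp add: less_imp_le)
  have t: "\<not> tri (1,2) (pt lam ?c 1)" using tri_pt(2)[OF l0 cg(2) zero_less_one] cg by simp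
  have e0: "eps NN (5/2) (pt lam ?c 1) = (if w lam ?c \<ge> w lam 1 \<and> w lam ?c \<ge> w ?c 1 then (if tri (1,2) (pt lam ?c 1) then (1,2) else (2,1))
        else if w lam 1 \<ge> w ?c 1 then (if tri (0,1) (pt lam ?c 1) then (0,1) else (1,0))
        else (if tri (0,2) (pt lam ?c 1) then (0,2) else (2,0)))"
    by (rule eps_pt[OF K1(2) K1(3) K1(1) l0 cg(2) zero_less_one])
  have e: "eps NN (5/2) (pt lam ?c 1) = (2,1)" unfolding e0 using a1 a2 t by simp
  have "Tmap (2,1) (pt lam ?c 1) = pt lam (?c - lam) 1" by (rule T21[OF l0 cg(2) zero_less_one])
  thus ?thesis unfolding T_K_def e cj_Suc .
qed

lemma phase3: assumes "j < m" shows "TT (pt (cj j) 1 lam) = pt (cj (Suc j)) 1 lam"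
proof -
  let ?c = "cj j"
  let ?L = "lam powr (5/2)" and ?C = "?c powr (5/2)" and ?n = "NN ?c"
  have n: "?n > 0" "?C > ?n" using key assms by auto
  have cg: "?c > lam" "?c > 0" using cj_gt assms by auto
  have l0: "lam > 0" using lam_gt1 by simp
  have L: "?L > 1" by (rule lam_powr)
  have w1: "w 1 lam = ?L" "w ?c 1 = ?C / ?n" "w ?c lam = ?L * (?C / ?n)"
    unfolding w_def N1(1) N1(2) using n by (auto simp: powr_mult)
  have Cn: "?C / ?n > 1" using n by simp
  have a1: "w ?c lam \<ge> w 1 lam" unfolding w1 using L Cn
    using mult_strict_left_mono[of 1 "?C / ?n" ?L] l0 by (simp add: less_imp_le)
  have a2: "w ?c lam > w ?c 1" unfolding w1 using L Cn
    using mult_strict_right_mono[of 1 ?L "?C / ?n"] l0 by (simp add: less_imp_le)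
  have t: "\<not> tri (0,1) (pt ?c 1 lam)" using tri_pt(3)[OF cg(2) zero_less_one l0] cg by simp
  have e0: "eps NN (5/2) (pt ?c 1 lam) = (if w ?c 1 \<ge> w ?c lam \<and> w ?c 1 \<ge> w 1 lam then (if tri (1,2) (pt ?c 1 lam) then (1,2) else (2,1))
        else if w ?c lam \<ge> w 1 lam then (if tri (0,1) (pt ?c 1 lam) then (0,1) else (1,0))
        else (if tri (0,2) (pt ?c 1 lam) then (0,2) else (2,0)))"
    by (rule eps_pt[OF K1(3) K1(1) K1(2) cg(2) zero_less_one l0])
  have e: "eps NN (5/2) (pt ?c 1 lam) = (1,0)" unfolding e0 using a1 a2 t by simp
  have "Tmap (1,0) (pt ?c 1 lam) = pt (?c - lam) 1 lam" by (rule T10[OF cg(2) zero_less_one l0])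
  thus ?thesis unfolding T_K_def e cj_Suc .
qed

end


context cub begin

lemma lam_cjm: "lam * cj m = 1" unfolding cj_def using lam3 by (simp add: algebra_simps power2_eq_square power3_eq_cube)
lemma cj0: "cj 0 = lam^2" unfolding cj_def by simp

lemma conn1: "pt 1 lam (cj m) = pt lam (cj 0) 1"
proof -
  have "pt 1 lam (cj m) = pt (lam*1) (lam*lam) (lam*cj m)" using lam_gt1 by (subst pt_scale) auto
  thus ?thesis unfolding lam_cjm cj0 by (simp add: power2_eq_square)
qed
lemma conn2: "pt lam (cj m) 1 = pt (cj 0) 1 lam"
proof -
  have "pt lam (cj m) 1 = pt (lam*lam) (lam*cj m) (lam*1)" using lam_gt1 by (subst pt_scale) auto
  thus ?thesis unfolding lam_cjm cj0 by (simp add: power2_eq_square)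
qed
lemma conn3: "pt (cj m) 1 lam = pt 1 lam (cj 0)"
proof -
  have "pt (cj m) 1 lam = pt (lam*cj m) (lam*1) (lam*lam)" using lam_gt1 by (subst pt_scale) auto
  thus ?thesis unfolding lam_cjm cj0 by (simp add: power2_eq_square)
qed

lemma it1: "j \<le> m \<Longrightarrow> (TT^^j) (pt 1 lam (cj 0)) = pt 1 lam (cj j)"
  by (induction j) (auto simp: phase1)
lemma it2: "j \<le> m \<Longrightarrow> (TT^^j) (pt lam (cj 0) 1) = pt lam (cj j) 1"
  by (induction j) (auto simp: phase2)
lemma it3: "j \<le> m \<Longrightarrow> (TT^^j) (pt (cj 0) 1 lam) = pt (cj j) 1 lam"
  by (induction j) (auto simp: phase3)

lemma period: "(TT^^(m+m+m)) (pt 1 lam (cj 0)) = pt 1 lam (cj 0)"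
  unfolding funpow_add comp_def using it1[of m] it2[of m] it3[of m] conn1 conn2 conn3 by simp

lemma p_eq: "(1 / (1 + lam + lam^2), lam / (1 + lam + lam^2)) = pt 1 lam (cj 0)"
  unfolding pt_def cj0 by simp

lemma p_in: "(1 / (1 + lam + lam^2), lam / (1 + lam + lam^2)) \<in> DeltaK (cubic_field lam)"
proof -
  define S where "S = 1 + lam + lam^2"
  have S0: "S > 0" unfolding S_def using lam_gt1 by (simp add: add_pos_nonneg)
  have SK: "S \<in> cubic_field lam" unfolding S_def
    using K1(1) K1(2) K1(3)[of 0] unfolding cj0 by (intro K_add) auto
  have iS: "1/S \<in> cubic_field lam" using K_inverse SK S0 by simp
  have lS: "lam/S \<in> cubic_field lam" using K_mult[OF K1(2) iS] by simp
  have ind: "p0 = 0 \<and> q = 0 \<and> s = 0" if h: "p0 \<in> \<rat>" "q \<in> \<rat>" "s \<in> \<rat>" "p0 + q*(1/S) + s*(lam/S) = 0" for p0 q s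
  proof -
    have "S * (p0 + q*(1/S) + s*(lam/S)) = 0" using h(4) by simp
    hence "p0 * S + q + s * lam = 0" using S0 by (simp add: algebra_simps)
    hence "(p0 + q) + (p0 + s) * lam + p0 * lam^2 = 0" unfolding S_def by (simp add: algebra_simps)
    moreover have "p0 + q \<in> \<rat>" "p0 + s \<in> \<rat>" using h by auto
    ultimately have "p0 + q = 0 \<and> p0 + s = 0 \<and> p0 = 0" using indep h(1) by blast
    thus ?thesis by simp
  qed
  have pos: "1/S > 0" "lam/S > 0" using S0 lam_gt1 by auto
  have "1/S + lam/S = (1 + lam)/S" by (simp add: add_divide_distrib)
  also have "\<dots> < 1" using S0 lam_gt1 unfolding S_def by simp
  finally have lt: "1/S + lam/S < 1" .
  show ?thesis unfolding DeltaK_def S_def[symmetric] using iS lS ind pos lt by blast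
qed

end

theorem theorem2p9:
  fixes m :: nat and lam :: real
  assumes "m > 0"
    and "lam ^ 3 - real m * lam ^ 2 - 1 = 0"
  shows "let K = cubic_field lam;
             T = T_K (field_norm lam) (5/2);
             p = (1 / (1 + lam + lam^2), lam / (1 + lam + lam^2))
         in p \<in> DeltaK K \<and>
            (\<exists>m1 n1. m1 > 0 \<and> n1 > 0 \<and> m1 \<noteq> n1 \<and> (T ^^ m1) p = (T ^^ n1) p)"
proof -
  interpret cub m lam using assms by unfold_locales
  let ?T = "T_K (field_norm lam) (5/2)"
  let ?p = "(1 / (1 + lam + lam^2), lam / (1 + lam + lam^2))"
  have per: "(?T ^^ (m+m+m)) ?p = ?p" unfolding p_eq by (rule period)
  have "(?T ^^ ((m+m+m) + (m+m+m))) ?p = (?T ^^ (m+m+m)) ?p"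
    unfolding funpow_add comp_def per[unfolded funpow_add comp_def] ..
  hence "\<exists>m1 n1. m1 > 0 \<and> n1 > 0 \<and> m1 \<noteq> n1 \<and> (?T ^^ m1) ?p = (?T ^^ n1) ?p"
    using assms(1) by (intro exI[of _ "(m+m+m) + (m+m+m)"] exI[of _ "m+m+m"]) auto
  thus ?thesis using p_in by (simp add: Let_def)
qed



end
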